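(* Let $p$ be a prime, let $R$ be a GWNC ring with $p\in{\rm Nil}(R)$, and let $G$ be a locally finite $p$-group. Then the group ring $RG$ is GWNC.
   Context: All rings are associative with identity. For a ring $S$, $U(S)$, ${\rm Nil}(S)$, ${\rm Id}(S)$ denote units, nilpotents, idempotents. $S$ is GWNC if every $a\in S\setminus U(S)$ can be written as $a=q+e$ or $a=q-e$ with $q\in{\rm Nil}(S)$, $e\in{\rm Id}(S)$. A group is a $p$-group if the order of each element is a power of $p$; it is locally finite if every finitely generated subgroup is finite. *)

theory Defs
  imports Main "HOL-Library.Poly_Mapping" "HOL-Computational_Algebra.Primes"
begin

definition is_unit_ring :: "'a::ring_1 \<Rightarrow> bool" where
  "is_unit_ring a \<longleftrightarrow> (\<exists>b. a * b = 1 \<and> b * a = 1)"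

definition is_nilpotent :: "'a::ring_1 \<Rightarrow> bool" where
  "is_nilpotent a \<longleftrightarrow> (\<exists>n::nat. a ^ n = 0)"

definition is_idempotent :: "'a::ring_1 \<Rightarrow> bool" where
  "is_idempotent e \<longleftrightarrow> e * e = e"

definition GWNC :: "'a::ring_1 itself \<Rightarrow> bool" where
  "GWNC _ \<longleftrightarrow> (\<forall>a::'a. \<not> is_unit_ring a \<longrightarrow>
      (\<exists>q e. is_nilpotent q \<and> is_idempotent e \<and> (a = q + e \<or> a = q - e)))"

section \<open>Groups (written additively: class group_add, not necessarily abelian)\<close>

definition gpow :: "'g::group_add \<Rightarrow> nat \<Rightarrow> 'g" where
  "gpow g n = (((+) g) ^^ n) 0"

definition elem_order :: "'g::group_add \<Rightarrow> nat" where
  "elem_order g = (if \<exists>n>0. gpow g n = 0 then (LEAST n. n > 0 \<and> gpow g n = 0) else 0)"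

definition p_group :: "nat \<Rightarrow> 'g::group_add itself \<Rightarrow> bool" where
  "p_group p _ \<longleftrightarrow> (\<forall>g::'g. \<exists>k::nat. elem_order g = p ^ k)"

inductive_set gen_subgroup :: "'g::group_add set \<Rightarrow> 'g set" for S where
  zero: "0 \<in> gen_subgroup S"
| gen: "s \<in> S \<Longrightarrow> s \<in> gen_subgroup S"
| add: "a \<in> gen_subgroup S \<Longrightarrow> b \<in> gen_subgroup S \<Longrightarrow> a + b \<in> gen_subgroup S"
| neg: "a \<in> gen_subgroup S \<Longrightarrow> - a \<in> gen_subgroup S"

definition locally_finite_group :: "'g::group_add itself \<Rightarrow> bool" where
  "locally_finite_group _ \<longleftrightarrow> (\<forall>S::'g set. finite S \<longrightarrow> finite (gen_subgroup S))"

text \<open>The group ring RG is the poly_mapping type from 'g to 'a of finitely supported functions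
  with convolution product (HOL-Library.Poly_Mapping).\<close>

end

theory Submission
  imports Defs "HOL-Algebra.Group_Action" "HOL-Algebra.Sylow" "HOL-Algebra.Multiplicative_Group"
begin

lemmas gsimp = diff_conv_add_uminus add.assoc minus_add_cancel add_minus_cancel right_minus left_minus
  add_0_right add_0_left minus_add minus_minus minus_zero

lemma gpow_0[simp]: "gpow g 0 = 0" by (simp add: gpow_def)
lemma gpow_Suc: "gpow g (Suc n) = g + gpow g n" by (simp add: gpow_def)
lemma gpow_add: "gpow g (m + n) = gpow g m + gpow g n"
  by (induct m) (simp_all add: gpow_Suc add.assoc)
lemma gpow_1[simp]: "gpow g 1 = g" by (simp add: gpow_Suc)
lemma gpow_Suc2: "gpow g (Suc n) = gpow g n + g" using gpow_add[of g n 1] by (simp add: gpow_Suc)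
lemma gpow_mult: "gpow g (m * n) = gpow (gpow g m) n"
  by (induct n) (simp_all add: gpow_Suc gpow_add)
lemma gpow_conj: "h + gpow g n - h = gpow (h + g - h) n"
proof (induct n)
  case 0 then show ?case by simp
next
  case (Suc n)
  have "h + gpow g (Suc n) - h = (h + g - h) + (h + gpow g n - h)"
    by (simp only: gpow_Suc gsimp)
  then show ?case using Suc by (simp add: gpow_Suc)
qed

definition sg :: "'g::group_add set \<Rightarrow> bool" where
  "sg H \<longleftrightarrow> 0 \<in> H \<and> (\<forall>a\<in>H. \<forall>b\<in>H. a + b \<in> H) \<and> (\<forall>a\<in>H. -a \<in> H)"

lemma sgD: assumes "sg H" shows "0 \<in> H" "a \<in> H \<Longrightarrow> b \<in> H \<Longrightarrow> a + b \<in> H"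
  "a \<in> H \<Longrightarrow> -a \<in> H" "a \<in> H \<Longrightarrow> b \<in> H \<Longrightarrow> a - b \<in> H"
  using assms unfolding sg_def diff_conv_add_uminus by blast+

lemma sg_gpow: "sg H \<Longrightarrow> g \<in> H \<Longrightarrow> gpow g n \<in> H"
  by (induct n) (auto simp: gpow_Suc sgD)

lemma elem_order_pow:
  assumes "elem_order g = p ^ k" "prime p" shows "gpow g (p^k) = 0"
proof -
  have "p ^ k > 0" using assms(2) by (simp add: prime_gt_0_nat)
  then have ex: "\<exists>n>0. gpow g n = 0" using assms(1) unfolding elem_order_def
    by (metis less_irrefl)
  then have "elem_order g = (LEAST n. n > 0 \<and> gpow g n = 0)" unfolding elem_order_def by simp
  moreover have "(LEAST n. n > 0 \<and> gpow g n = 0) > 0 \<and> gpow g (LEAST n. n > 0 \<and> gpow g n = 0) = 0"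
    using ex by (rule LeastI_ex)
  ultimately show ?thesis using assms(1) by simp
qed

section \<open>Group ring basics\<close>

definition gel :: "'g::group_add \<Rightarrow> ('g \<Rightarrow>\<^sub>0 'a::ring_1)" where
  "gel g = Poly_Mapping.single g 1"

definition dl :: "'g::group_add \<Rightarrow> ('g \<Rightarrow>\<^sub>0 'a::ring_1)" where
  "dl g = gel g - 1"

definition CC :: "'a::ring_1 \<Rightarrow> ('g::group_add \<Rightarrow>\<^sub>0 'a)" where
  "CC r = Poly_Mapping.single 0 r"

lemma gel_mult: "(gel g :: 'g::group_add \<Rightarrow>\<^sub>0 'a::ring_1) * gel h = gel (g + h)"
  by (simp add: gel_def mult_single)

lemma gel_0: "(gel 0 :: 'g::group_add \<Rightarrow>\<^sub>0 'a::ring_1) = 1"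
  by (simp add: gel_def)

lemma gel_pow: "(gel g :: 'g::group_add \<Rightarrow>\<^sub>0 'a::ring_1) ^ n = gel (gpow g n)"
  by (induct n) (simp_all add: gel_0 gel_mult gpow_Suc)

lemma dl_0[simp]: "(dl 0 :: 'g::group_add \<Rightarrow>\<^sub>0 'a::ring_1) = 0"
  by (simp add: dl_def gel_0)

lemma CC_mult: "CC r * CC s = CC (r * s)"
  by (simp add: CC_def mult_single)

lemma CC_single: "CC r * Poly_Mapping.single g s = Poly_Mapping.single g (r * s)"
  by (simp add: CC_def mult_single)

lemma single_CC: "Poly_Mapping.single g s * CC r = Poly_Mapping.single g (s * r)"
  by (simp add: CC_def mult_single)

lemma single_gel: "(Poly_Mapping.single g s :: 'g::group_add \<Rightarrow>\<^sub>0 'a::ring_1) = CC s * gel g"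
  by (simp add: CC_def gel_def mult_single)

lemma CC_gel_comm: "(CC r :: 'g::group_add \<Rightarrow>\<^sub>0 'a::ring_1) * gel g = gel g * CC r"
  by (simp add: CC_def gel_def mult_single)

lemma CC_add: "CC (r + s) = CC r + CC s" by (simp add: CC_def single_add)
lemma CC_diff: "CC (r - s) = CC r - CC s" by (simp add: CC_def single_diff)
lemma CC_0[simp]: "CC 0 = 0" by (simp add: CC_def)
lemma CC_1[simp]: "CC 1 = 1" by (simp add: CC_def)
lemma CC_pow: "CC r ^ n = CC (r ^ n)" by (induct n) (simp_all add: CC_mult)
lemma CC_of_nat: "CC (of_nat n) = of_nat n" by (simp add: CC_def)


definition inH :: "'g::group_add set \<Rightarrow> ('g \<Rightarrow>\<^sub>0 'a::ring_1) \<Rightarrow> bool" where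
  "inH H a \<longleftrightarrow> Poly_Mapping.keys a \<subseteq> H"

lemma inH_0[simp]: "inH H 0" by (simp add: inH_def)
lemma inH_1: "sg H \<Longrightarrow> inH H 1" by (simp add: inH_def sgD)
lemma inH_add: "inH H a \<Longrightarrow> inH H b \<Longrightarrow> inH H (a + b)"
  unfolding inH_def using keys_add[of a b] by blast
lemma inH_uminus: "inH H a \<Longrightarrow> inH H (- a)"
  unfolding inH_def by simp
lemma inH_diff: "inH H a \<Longrightarrow> inH H b \<Longrightarrow> inH H (a - b)"
  by (metis diff_conv_add_uminus inH_add inH_uminus)
lemma inH_mult: "sg H \<Longrightarrow> inH H a \<Longrightarrow> inH H b \<Longrightarrow> inH H (a * b)"
proof -
  assume H: "sg H" "inH H a" "inH H b"
  show ?thesis unfolding inH_def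
  proof
    fix x assume "x \<in> Poly_Mapping.keys (a * b)"
    then obtain u v where "x = u + v" "u \<in> Poly_Mapping.keys a" "v \<in> Poly_Mapping.keys b"
      using keys_mult[of a b] by blast
    then show "x \<in> H" using H sgD(2)[of H u v] unfolding inH_def by blast
  qed
qed
lemma inH_pow: "sg H \<Longrightarrow> inH H a \<Longrightarrow> inH H (a ^ n)"
  by (induct n) (simp_all add: inH_1 inH_mult)
lemma inH_single: "g \<in> H \<Longrightarrow> inH H (Poly_Mapping.single g r)"
  by (simp add: inH_def)
lemma inH_gel: "g \<in> H \<Longrightarrow> inH H (gel g)"
  by (simp add: gel_def inH_single)
lemma inH_CC: "sg H \<Longrightarrow> inH H (CC r)"
  by (simp add: CC_def inH_single sgD)
lemma inH_of_nat: "sg H \<Longrightarrow> inH H (of_nat n)"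
  by (metis CC_of_nat inH_CC)
lemma inH_dl: "sg H \<Longrightarrow> g \<in> H \<Longrightarrow> inH H (dl g)"
  by (simp add: dl_def inH_diff inH_gel inH_1)
lemma inH_sum: "(\<And>i. i \<in> I \<Longrightarrow> inH H (f i)) \<Longrightarrow> inH H (sum f I)"
  by (induct I rule: infinite_finite_induct) (auto intro: inH_add)

lemma expansion: "x = (\<Sum>g\<in>Poly_Mapping.keys x. Poly_Mapping.single g (Poly_Mapping.lookup x g))"
proof (rule poly_mapping_eqI)
  fix k
  have "Poly_Mapping.lookup (\<Sum>g\<in>Poly_Mapping.keys x. Poly_Mapping.single g (Poly_Mapping.lookup x g)) k
     = (\<Sum>g\<in>Poly_Mapping.keys x. if g = k then Poly_Mapping.lookup x g else 0)"
    unfolding lookup_sum by (intro sum.cong refl) (simp add: lookup_single when_def)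
  also have "\<dots> = Poly_Mapping.lookup x k"
    by (simp add: sum.delta' in_keys_iff)
  finally show "Poly_Mapping.lookup x k = Poly_Mapping.lookup (\<Sum>g\<in>Poly_Mapping.keys x. Poly_Mapping.single g (Poly_Mapping.lookup x g)) k" by simp
qed

lemma binom1: "((y::'r::ring_1) + 1) ^ n = (\<Sum>k\<le>n. of_nat (n choose k) * y ^ k)"
proof (induct n)
  case 0 then show ?case by simp
next
  case (Suc n)
  let ?S = "\<Sum>k\<le>n. of_nat (n choose k) * y ^ k"
  have 1: "y * ?S = (\<Sum>k\<le>n. of_nat (n choose k) * y ^ Suc k)"
    unfolding sum_distrib_left by (intro sum.cong refl) (metis mult.assoc mult_of_nat_commute power_Suc)
  have 2: "?S = 1 + (\<Sum>k<n. of_nat (n choose Suc k) * y ^ Suc k)"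
    by (simp add: sum.atMost_shift)
  have 3: "(\<Sum>k<n. of_nat (n choose Suc k) * y ^ Suc k) = (\<Sum>k\<le>n. of_nat (n choose Suc k) * y ^ Suc k)"
    by (simp add: lessThan_Suc_atMost[symmetric] binomial_eq_0)
  have 4: "(\<Sum>k\<le>Suc n. of_nat (Suc n choose k) * y ^ k) = 1 + (\<Sum>k\<le>n. of_nat (Suc n choose Suc k) * y ^ Suc k)"
    by (simp only: sum.atMost_Suc_shift) simp
  have 5: "(\<Sum>k\<le>n. of_nat (Suc n choose Suc k) * y ^ Suc k)
     = (\<Sum>k\<le>n. of_nat (n choose k) * y ^ Suc k) + (\<Sum>k\<le>n. of_nat (n choose Suc k) * y ^ Suc k)"
    by (simp add: distrib_right sum.distrib)
  have 6: "?S = 1 + (\<Sum>k\<le>n. of_nat (n choose Suc k) * y ^ Suc k)"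
    by (simp only: 2 3)
  have "(y + 1) ^ Suc n = y * ?S + ?S"
    using Suc by (simp add: distrib_right)
  also have "y * ?S + ?S = (\<Sum>k\<le>n. of_nat (n choose k) * y ^ Suc k) + (1 + (\<Sum>k\<le>n. of_nat (n choose Suc k) * y ^ Suc k))"
    by (rule arg_cong2[where f="(+)"]) (fact 1, fact 6)
  also have "\<dots> = 1 + (\<Sum>k\<le>n. of_nat (Suc n choose Suc k) * y ^ Suc k)"
    unfolding 5 by (simp only: add_ac)
  also have "\<dots> = (\<Sum>k\<le>Suc n. of_nat (Suc n choose k) * y ^ k)" using 4 by simp
  finally show ?case .
qed

lemma geom1: "((x::'r::ring_1) - 1) * (\<Sum>i<n. x ^ i) = x ^ n - 1"
  by (induct n) (simp_all add: distrib_left algebra_simps)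

inductive_set JI :: "nat \<Rightarrow> 'g::group_add set \<Rightarrow> 'g set \<Rightarrow> ('g \<Rightarrow>\<^sub>0 'a::ring_1) set"
  for p H S where
  gen: "s \<in> S \<Longrightarrow> dl s \<in> JI p H S"
| pp: "of_nat p \<in> JI p H S"
| add: "a \<in> JI p H S \<Longrightarrow> b \<in> JI p H S \<Longrightarrow> a + b \<in> JI p H S"
| lm: "inH H c \<Longrightarrow> a \<in> JI p H S \<Longrightarrow> c * a \<in> JI p H S"
| rm: "inH H c \<Longrightarrow> a \<in> JI p H S \<Longrightarrow> a * c \<in> JI p H S"

lemma JI_0: "0 \<in> JI p H S"
  using JI.lm[OF inH_0 JI.pp] by simp

lemma JI_uminus: "sg H \<Longrightarrow> a \<in> JI p H S \<Longrightarrow> - a \<in> JI p H S"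
  using JI.lm[OF inH_uminus[OF inH_1], of H a p S] by simp

lemma JI_diff: "sg H \<Longrightarrow> a \<in> JI p H S \<Longrightarrow> b \<in> JI p H S \<Longrightarrow> a - b \<in> JI p H S"
  by (metis JI.add JI_uminus diff_conv_add_uminus)

lemma JI_sum: "(\<And>i. i \<in> I \<Longrightarrow> f i \<in> JI p H S) \<Longrightarrow> sum f I \<in> JI p H S"
  by (induct I rule: infinite_finite_induct) (auto intro: JI.add JI_0)

lemma JI_inH: assumes "sg H" "S \<subseteq> H" "a \<in> JI p H S" shows "inH H a"
  using assms(3) by induct (use assms in \<open>auto intro: inH_dl inH_of_nat inH_add inH_mult\<close>)

lemma JI_mono: assumes "S \<subseteq> S'" "a \<in> JI p H S" shows "a \<in> JI p H S'"
  using assms(2) by induct (use assms(1) in \<open>auto intro: JI.intros\<close>)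

lemma JI_zero_sub: assumes "a \<in> JI p H {0}" shows "\<exists>b. a = of_nat p * b"
  using assms
proof induct
  case (gen s) then show ?case by (intro exI[of _ 0]) simp
next
  case pp then show ?case by (intro exI[of _ 1]) simp
next
  case (add a b) then show ?case by (metis distrib_left)
next
  case (lm c a) then obtain b where "a = of_nat p * b" by blast
  then show ?case by (metis mult.assoc mult_of_nat_commute)
next
  case (rm c a) then show ?case by (metis mult.assoc)
qed

lemma gpow_Suc0[simp]: "gpow g (Suc 0) = g" by (simp add: gpow_Suc)

definition GH :: "'g::group_add set \<Rightarrow> 'g monoid" where
  "GH H = \<lparr>carrier = H, monoid.mult = (+), one = 0\<rparr>"

lemma GH_carrier[simp]: "carrier (GH H) = H" by (simp add: GH_def)
lemma GH_mult[simp]: "x \<otimes>\<^bsub>GH H\<^esub> y = x + y" by (simp add: GH_def)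
lemma GH_one[simp]: "\<one>\<^bsub>GH H\<^esub> = 0" by (simp add: GH_def)

lemma group_GH: assumes "sg H" shows "group (GH H)"
proof (rule groupI)
  show "\<And>x y. x \<in> carrier (GH H) \<Longrightarrow> y \<in> carrier (GH H) \<Longrightarrow> x \<otimes>\<^bsub>GH H\<^esub> y \<in> carrier (GH H)"
    using sgD(2)[OF assms] by simp
  show "\<one>\<^bsub>GH H\<^esub> \<in> carrier (GH H)" using sgD(1)[OF assms] by simp
  show "\<And>x y z. x \<in> carrier (GH H) \<Longrightarrow> y \<in> carrier (GH H) \<Longrightarrow> z \<in> carrier (GH H) \<Longrightarrow>
    x \<otimes>\<^bsub>GH H\<^esub> y \<otimes>\<^bsub>GH H\<^esub> z = x \<otimes>\<^bsub>GH H\<^esub> (y \<otimes>\<^bsub>GH H\<^esub> z)"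
    by (simp add: add.assoc)
  show "\<And>x. x \<in> carrier (GH H) \<Longrightarrow> \<one>\<^bsub>GH H\<^esub> \<otimes>\<^bsub>GH H\<^esub> x = x" by simp
  show "\<And>x. x \<in> carrier (GH H) \<Longrightarrow> \<exists>y\<in>carrier (GH H). y \<otimes>\<^bsub>GH H\<^esub> x = \<one>\<^bsub>GH H\<^esub>"
    using sgD(3)[OF assms] by (metis GH_carrier GH_mult GH_one left_minus)
qed

lemma GH_pow: "x [^]\<^bsub>GH H\<^esub> (n::nat) = gpow x n"
  by (induct n) (simp_all add: gpow_Suc2)

lemma GH_inv: assumes "sg H" "x \<in> H" shows "inv\<^bsub>GH H\<^esub> x = - x"
  using group.inv_equality[OF group_GH[OF assms(1)], of "-x" x] assms sgD(3)[OF assms(1)] by simp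

lemma GH_rcos: "S #>\<^bsub>GH H\<^esub> a = (\<lambda>s. s + a) ` S"
  unfolding r_coset_def by auto

lemma GH_lcos: "a <#\<^bsub>GH H\<^esub> Q = (\<lambda>q. a + q) ` Q"
  unfolding l_coset_def by auto

lemma order_GH: "order (GH H) = card H" by (simp add: order_def)

lemma subgroup_GH: assumes "sg H" "sg S" "S \<subseteq> H" shows "subgroup S (GH H)"
proof
  show "S \<subseteq> carrier (GH H)" using assms by simp
  show "\<And>x y. x \<in> S \<Longrightarrow> y \<in> S \<Longrightarrow> x \<otimes>\<^bsub>GH H\<^esub> y \<in> S" using sgD(2)[OF assms(2)] by simp
  show "\<one>\<^bsub>GH H\<^esub> \<in> S" using sgD(1)[OF assms(2)] by simp
  show "\<And>x. x \<in> S \<Longrightarrow> inv\<^bsub>GH H\<^esub> x \<in> S"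
    using GH_inv[OF assms(1)] sgD(3)[OF assms(2)] assms(3) by auto
qed

lemma GH_subgroup_sg: assumes "sg H" "subgroup P (GH H)" shows "sg P" "P \<subseteq> H"
proof -
  show "P \<subseteq> H" using subgroup.subset[OF assms(2)] by simp
  then show "sg P" unfolding sg_def
    using subgroup.m_closed[OF assms(2)] subgroup.one_closed[OF assms(2)]
      subgroup.m_inv_closed[OF assms(2)] GH_inv[OF assms(1)] by fastforce
qed

lemma all_factors_p:
  fixes n p :: nat
  assumes "n > 0" "\<forall>q. prime q \<longrightarrow> q dvd n \<longrightarrow> q = p"
  shows "\<exists>k. n = p ^ k"
  using assms
proof (induct n rule: less_induct)
  case (less n)
  show ?case
  proof (cases "n = 1")
    case True then show ?thesis by (intro exI[of _ 0]) simp
  next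
    case False
    then obtain q where q: "prime q" "q dvd n" using prime_factor_nat by blast
    then have qp: "q = p" using less.prems by blast
    then obtain m where m: "n = p * m" using q by blast
    have "p > 1" using q qp prime_gt_1_nat by blast
    then have "m < n" "m > 0" using m less.prems(1) by auto
    moreover have "\<forall>q. prime q \<longrightarrow> q dvd m \<longrightarrow> q = p" using less.prems(2) m by auto
    ultimately obtain k where "m = p ^ k" using less.hyps by blast
    then show ?thesis using m by (intro exI[of _ "Suc k"]) simp
  qed
qed

lemma gpow_zero_base: "gpow (0::'g::group_add) n = 0"
  by (induct n) (simp_all add: gpow_Suc)

lemma gpow_coprime_zero:
  assumes "gpow x q = 0" "gpow x r = 0" "coprime q r" "q \<noteq> 0"
  shows "x = 0"
proof -
  obtain u v where uv: "q * u = r * v + gcd q r" using bezout_nat[OF assms(4)] by blast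
  then have uv': "q * u = r * v + 1" using assms(3) by simp
  have "gpow x (q * u) = 0" by (simp add: gpow_mult assms(1) gpow_zero_base)
  moreover have "gpow x (r * v + 1) = x" by (simp only: gpow_add gpow_mult assms(2) gpow_zero_base gpow_1 add_0_left)
  ultimately show ?thesis using uv' by simp
qed

lemma card_pgroup:
  assumes pr: "prime p" and sgH: "sg H" and fin: "finite H"
    and pg: "\<forall>g\<in>H. \<exists>k. elem_order g = p ^ k"
  shows "\<exists>n. card H = p ^ n"
proof (rule all_factors_p)
  show "card H > 0" using fin sgD(1)[OF sgH] card_gt_0_iff by blast
  show "\<forall>q. prime q \<longrightarrow> q dvd card H \<longrightarrow> q = p"
  proof (intro allI impI, rule ccontr)
    fix q :: nat assume q: "prime q" "q dvd card H" "q \<noteq> p"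
    then obtain m where m: "card H = q ^ 1 * m" by auto
    have "\<exists>P. subgroup P (GH H) \<and> card P = q ^ 1"
      by (rule sylow_thm[OF q(1) group_GH[OF sgH], of 1 m]) (simp_all add: m fin order_GH)
    then obtain P where P: "subgroup P (GH H)" "card P = q" by auto
    have sgP: "sg P" and PH: "P \<subseteq> H" using GH_subgroup_sg[OF sgH P(1)] by auto
    have finP: "finite P" using PH fin finite_subset by blast
    have "P \<subseteq> {0}"
    proof
      fix x assume xP: "x \<in> P"
      have "x [^]\<^bsub>GH P\<^esub> order (GH P) = \<one>\<^bsub>GH P\<^esub>"
        by (rule group.pow_order_eq_1[OF group_GH[OF sgP]]) (simp add: xP)
      then have x1: "gpow x q = 0" by (simp add: GH_pow order_GH P(2))
      obtain k where "elem_order x = p ^ k" using pg xP PH by blast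
      then have x2: "gpow x (p ^ k) = 0" using elem_order_pow pr by blast
      have "coprime q (p ^ k)" by (metis coprime_power_right_iff primes_coprime q(1) q(3) pr)
      then show "x \<in> {0}" using gpow_coprime_zero[OF x1 x2] q(1) by (simp add: prime_gt_0_nat)
    qed
    then have "card P \<le> 1" using card_mono[of "{0}" P] by simp
    moreover have "q > 1" using q(1) prime_gt_1_nat by blast
    ultimately show False using P(2) by simp
  qed
qed

definition ext_sg :: "'g::group_add set \<Rightarrow> 'g \<Rightarrow> 'g set" where
  "ext_sg S z = {gpow z j + s | j s. s \<in> S}"

context
  fixes H S :: "'g::group_add set" and z :: 'g and e :: nat
  assumes sgH: "sg H" and sgS: "sg S" and SH: "S \<subseteq> H"
    and nS: "\<forall>h\<in>H. \<forall>s\<in>S. h + s - h \<in> S"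
    and zH: "z \<in> H" and cz: "\<forall>h\<in>H. h + z - h - z \<in> S" and ze: "gpow z e = 0" "e > 0"
begin

lemma conj_S: "h \<in> H \<Longrightarrow> s \<in> S \<Longrightarrow> h + s - h \<in> S" using nS by blast

lemma conj_S': "h \<in> H \<Longrightarrow> s \<in> S \<Longrightarrow> - h + s + h \<in> S"
  using conj_S[of "-h" s] sgD(3)[OF sgH] by (simp add: diff_conv_add_uminus)

lemma gpow_neg: "- gpow z j = gpow z (e * j - j)"
proof -
  have "gpow z (e * j - j) + gpow z j = gpow z (e * j)"
    using ze(2) by (simp add: gpow_add[symmetric])
  also have "\<dots> = 0" by (simp only: gpow_mult ze(1) gpow_zero_base)
  finally show ?thesis by (metis add_eq_0_iff2 minus_unique)
qed

lemma ext_sg_sub: "S \<subseteq> ext_sg S z"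
  unfolding ext_sg_def by (force intro: exI[of _ 0])

lemma z_ext: "z \<in> ext_sg S z"
proof -
  have "z = gpow z 1 + 0" by simp
  then show ?thesis unfolding ext_sg_def using sgD(1)[OF sgS] by blast
qed

lemma ext_sg_H: "ext_sg S z \<subseteq> H"
  unfolding ext_sg_def using SH sg_gpow[OF sgH zH] sgD(2)[OF sgH] by blast

lemma sg_ext: "sg (ext_sg S z)"
  unfolding sg_def
proof (intro conjI ballI)
  show "0 \<in> ext_sg S z" using ext_sg_sub sgD(1)[OF sgS] by blast
next
  fix a b assume "a \<in> ext_sg S z" "b \<in> ext_sg S z"
  then obtain i s j t where a: "a = gpow z i + s" "s \<in> S" and b: "b = gpow z j + t" "t \<in> S"
    unfolding ext_sg_def by blast
  have zj: "gpow z j \<in> H" using sg_gpow[OF sgH zH] .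
  have "a + b = gpow z (i + j) + ((- gpow z j + s + gpow z j) + t)"
    unfolding a b gpow_add by (simp only: gsimp)
  moreover have "(- gpow z j + s + gpow z j) + t \<in> S"
    by (intro sgD(2)[OF sgS] conj_S' zj a b)
  ultimately show "a + b \<in> ext_sg S z" unfolding ext_sg_def by blast
next
  fix a assume "a \<in> ext_sg S z"
  then obtain i s where a: "a = gpow z i + s" "s \<in> S" unfolding ext_sg_def by blast
  have zi: "gpow z i \<in> H" using sg_gpow[OF sgH zH] .
  have "- a = gpow z (e * i - i) + (gpow z i + - s - gpow z i)"
    unfolding a gpow_neg[symmetric] by (simp only: gsimp)
  moreover have "gpow z i + - s - gpow z i \<in> S"
    by (intro conj_S zi sgD(3)[OF sgS] a)
  ultimately show "- a \<in> ext_sg S z" unfolding ext_sg_def by blast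
qed

lemma gpow_cz: assumes "c \<in> S" shows "\<exists>t\<in>S. gpow (c + z) j = t + gpow z j"
proof (induct j)
  case 0 then show ?case using sgD(1)[OF sgS] by (intro bexI[of _ 0]) simp_all
next
  case (Suc j)
  then obtain t where t: "t \<in> S" "gpow (c + z) j = t + gpow z j" by blast
  have "gpow (c + z) (Suc j) = (c + (z + t - z)) + gpow z (Suc j)"
    unfolding gpow_Suc t(2) by (simp only: gsimp)
  moreover have "c + (z + t - z) \<in> S" by (intro sgD(2)[OF sgS] assms conj_S zH t)
  ultimately show ?case by blast
qed

lemma normal_ext: "\<forall>h\<in>H. \<forall>s\<in>ext_sg S z. h + s - h \<in> ext_sg S z"
proof (intro ballI)
  fix h a assume h: "h \<in> H" and "a \<in> ext_sg S z"
  then obtain j s where a: "a = gpow z j + s" "s \<in> S" unfolding ext_sg_def by blast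
  define c where "c = h + z - h - z"
  have c: "c \<in> S" using cz h c_def by blast
  have hz: "h + z - h = c + z" unfolding c_def by (simp only: gsimp)
  obtain t where t: "t \<in> S" "gpow (c + z) j = t + gpow z j" using gpow_cz[OF c] by blast
  have zj: "gpow z j \<in> H" using sg_gpow[OF sgH zH] .
  have "h + a - h = (h + gpow z j - h) + (h + s - h)"
    unfolding a by (simp only: gsimp)
  also have "h + gpow z j - h = t + gpow z j" unfolding gpow_conj hz t(2) ..
  finally have "h + a - h = gpow z j + ((- gpow z j + t + gpow z j) + (h + s - h))"
    by (simp only: gsimp)
  moreover have "(- gpow z j + t + gpow z j) + (h + s - h) \<in> S"
    by (intro sgD(2)[OF sgS] conj_S' conj_S zj t h a)
  ultimately show "h + a - h \<in> ext_sg S z" unfolding ext_sg_def by blast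
qed

end

context
  fixes p :: nat and H S :: "'g::group_add set" and z :: 'g
  assumes pr: "prime p" and sgH: "sg H" and sgS: "sg S" and SH: "S \<subseteq> H"
    and nS: "\<forall>h\<in>H. \<forall>s\<in>S. h + s - h \<in> S"
    and zH: "z \<in> H" and cz: "\<forall>h\<in>H. h + z - h - z \<in> S" and zp: "gpow z p \<in> S"
begin

lemma dl_CC_comm: "dl z * CC r = CC r * (dl z :: 'g \<Rightarrow>\<^sub>0 'a::ring_1)"
  by (simp add: dl_def left_diff_distrib right_diff_distrib CC_gel_comm)

lemma comm_single:
  assumes g: "g \<in> H"
  shows "Poly_Mapping.single g r * dl z - dl z * Poly_Mapping.single g r \<in> (JI p H S :: ('g \<Rightarrow>\<^sub>0 'a::ring_1) set)"
proof -
  define c where "c = g + z - g - z"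
  have cS: "c \<in> S" using cz g c_def by blast
  have cz': "c + (z + g) = g + z" unfolding c_def by (simp only: gsimp)
  have zg: "z + g \<in> H" using sgD(2)[OF sgH zH g] .
  have e1: "gel g * dl z - dl z * gel g = (dl c * gel (z + g) :: 'g \<Rightarrow>\<^sub>0 'a)"
    by (simp add: dl_def left_diff_distrib right_diff_distrib gel_mult cz')
  have "dl c * gel (z + g) \<in> (JI p H S :: ('g \<Rightarrow>\<^sub>0 'a) set)"
    by (rule JI.rm[OF inH_gel[OF zg] JI.gen[OF cS]])
  then have "CC r * (gel g * dl z - dl z * gel g) \<in> (JI p H S :: ('g \<Rightarrow>\<^sub>0 'a) set)"
    unfolding e1 by (rule JI.lm[OF inH_CC[OF sgH]])
  moreover have "CC r * (gel g * dl z - dl z * gel g) =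
      Poly_Mapping.single g r * dl z - dl z * (Poly_Mapping.single g r :: 'g \<Rightarrow>\<^sub>0 'a)"
  proof -
    have "CC r * (dl z * gel g) = dl z * (CC r * gel g :: 'g \<Rightarrow>\<^sub>0 'a)"
      by (metis dl_CC_comm mult.assoc)
    then show ?thesis
      unfolding single_gel right_diff_distrib by (simp only: mult.assoc)
  qed
  ultimately show ?thesis by simp
qed

lemma comm1:
  assumes a: "inH H a"
  shows "a * dl z - dl z * a \<in> (JI p H S :: ('g \<Rightarrow>\<^sub>0 'a::ring_1) set)"
proof -
  have "a * dl z - dl z * a = (\<Sum>g\<in>Poly_Mapping.keys a.
      Poly_Mapping.single g (Poly_Mapping.lookup a g) * dl z - dl z * Poly_Mapping.single g (Poly_Mapping.lookup a g))"
    apply (subst (1 2) expansion[of a])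
    by (simp add: sum_distrib_left sum_distrib_right sum_subtractf)
  also have "\<dots> \<in> JI p H S"
    using a unfolding inH_def by (intro JI_sum comm_single) blast
  finally show ?thesis .
qed

lemma commn:
  assumes a: "inH H a"
  shows "a * dl z ^ n - dl z ^ n * a \<in> (JI p H S :: ('g \<Rightarrow>\<^sub>0 'a::ring_1) set)"
proof (induct n)
  case 0 then show ?case by (simp add: JI_0)
next
  case (Suc n)
  have "a * dl z ^ Suc n - dl z ^ Suc n * a
     = (a * dl z ^ n - dl z ^ n * a) * dl z + dl z ^ n * (a * dl z - dl z * (a :: 'g \<Rightarrow>\<^sub>0 'a))"
    unfolding power_Suc2 by (simp add: algebra_simps del: power_Suc)
  also have "\<dots> \<in> JI p H S"
    by (intro JI.add JI.rm JI.lm Suc comm1 a inH_dl inH_pow sgH zH)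
  finally show ?case .
qed

lemma ext_sub: "ext_sg S z \<subseteq> H"
  unfolding ext_sg_def using SH sg_gpow[OF sgH zH] sgD(2)[OF sgH] by blast

lemma decomp:
  assumes "y \<in> (JI p H (ext_sg S z) :: ('g \<Rightarrow>\<^sub>0 'a::ring_1) set)"
  shows "\<exists>t c. t \<in> (JI p H S :: ('g \<Rightarrow>\<^sub>0 'a) set) \<and> inH H c \<and> y = t + dl z * c"
  using assms
proof induct
  case (gen s')
  then obtain j s where s': "s' = gpow z j + s" and s: "s \<in> S" unfolding ext_sg_def by blast
  have "(dl s' :: 'g \<Rightarrow>\<^sub>0 'a) = gel (gpow z j) * dl s + dl z * (\<Sum>i<j. gel z ^ i)"
    unfolding dl_def geom1 s' by (simp add: gel_pow right_diff_distrib gel_mult)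
  moreover have "gel (gpow z j) * dl s \<in> (JI p H S :: ('g \<Rightarrow>\<^sub>0 'a) set)"
    by (intro JI.lm JI.gen s inH_gel sg_gpow sgH zH)
  moreover have "inH H (\<Sum>i<j. (gel z :: 'g \<Rightarrow>\<^sub>0 'a) ^ i)"
    by (intro inH_sum inH_pow inH_gel sgH zH)
  ultimately show ?case by blast
next
  case pp
  then show ?case by (intro exI[of _ "of_nat p"] exI[of _ 0]) (simp add: JI.pp)
next
  case (add a b)
  then obtain t1 c1 t2 c2 where "t1 \<in> JI p H S" "inH H c1" "a = t1 + dl z * c1"
     "t2 \<in> JI p H S" "inH H c2" "b = t2 + dl z * c2" by blast
  then show ?case
    by (intro exI[of _ "t1 + t2"] exI[of _ "c1 + c2"]) (simp add: JI.add inH_add distrib_left add_ac)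
next
  case (lm c' a)
  then obtain t c where tc: "t \<in> JI p H S" "inH H c" "a = t + dl z * c" by blast
  define u where "u = c' * dl z - dl z * c'"
  have u: "u \<in> JI p H S" unfolding u_def by (rule comm1[OF lm(1)])
  have "c' * a = (c' * t + u * c) + dl z * (c' * c)"
    unfolding tc(3) u_def by (simp add: algebra_simps)
  moreover have "c' * t + u * c \<in> JI p H S"
    by (intro JI.add JI.lm JI.rm lm(1) tc u)
  moreover have "inH H (c' * c)" by (intro inH_mult sgH lm(1) tc)
  ultimately show ?case by blast
next
  case (rm c' a)
  then obtain t c where tc: "t \<in> JI p H S" "inH H c" "a = t + dl z * c" by blast
  have "a * c' = t * c' + dl z * (c * c')"
    unfolding tc(3) by (simp add: algebra_simps)
  moreover have "t * c' \<in> JI p H S" by (intro JI.rm rm(1) tc)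
  moreover have "inH H (c * c')" by (intro inH_mult sgH rm(1) tc)
  ultimately show ?case by blast
qed

lemma prodlist:
  assumes "set ys \<subseteq> (JI p H (ext_sg S z) :: ('g \<Rightarrow>\<^sub>0 'a::ring_1) set)"
  shows "\<exists>t c. t \<in> (JI p H S :: ('g \<Rightarrow>\<^sub>0 'a) set) \<and> inH H c \<and> prod_list ys = t + dl z ^ length ys * c"
  using assms
proof (induct ys)
  case Nil
  then show ?case by (intro exI[of _ 0] exI[of _ 1]) (simp add: JI_0 inH_1 sgH)
next
  case (Cons y ys)
  then obtain t c where tc: "t \<in> JI p H S" "inH H c" "prod_list ys = t + dl z ^ length ys * c" by auto
  from Cons.prems have yJ: "y \<in> JI p H (ext_sg S z)" by auto
  then obtain t' c' where tc': "t' \<in> JI p H S" "inH H c'" "y = t' + dl z * c'"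
    using decomp by blast
  have yH: "inH H y" by (rule JI_inH[OF sgH ext_sub yJ])
  define n where "n = length ys"
  define u where "u = c' * dl z ^ n - dl z ^ n * c'"
  have u: "u \<in> JI p H S" unfolding u_def by (rule commn[OF tc'(2)])
  have "prod_list (y # ys) = (y * t + t' * (dl z ^ n * c) + dl z * u * c) + dl z ^ length (y # ys) * (c' * c)"
  proof -
    have "prod_list (y # ys) = (t' + dl z * c') * (t + dl z ^ n * c)"
      using tc(3) tc'(3) n_def by simp
    also have "\<dots> = (t' + dl z * c') * t + t' * (dl z ^ n * c) + dl z * (c' * dl z ^ n) * c"
      by (simp add: algebra_simps)
    also have "c' * dl z ^ n = u + dl z ^ n * c'" unfolding u_def by simp
    finally show ?thesis using tc'(3) n_def
      by (simp add: algebra_simps del: power_Suc) (simp add: power_Suc mult.assoc)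
  qed
  moreover have "y * t + t' * (dl z ^ n * c) + dl z * u * c \<in> JI p H S"
    by (intro JI.add JI.lm JI.rm yH tc tc' u inH_mult inH_pow inH_dl sgH zH)
  moreover have "inH H (c' * c)" by (intro inH_mult sgH tc tc')
  ultimately show ?case by blast
qed

lemma dlp: "dl z ^ p \<in> (JI p H S :: ('g \<Rightarrow>\<^sub>0 'a::ring_1) set)"
proof -
  define y :: "'g \<Rightarrow>\<^sub>0 'a" where "y = dl z"
  obtain m where pm: "p = Suc m" using prime_gt_0_nat[OF pr] by (cases p) auto
  have "gel (gpow z p) = (y + 1) ^ p" unfolding y_def dl_def gel_pow[symmetric] by simp
  also have "\<dots> = (\<Sum>k\<le>p. of_nat (p choose k) * y ^ k)" by (rule binom1)
  also have "\<dots> = 1 + (\<Sum>k<m. of_nat (p choose Suc k) * y ^ Suc k) + y ^ p"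
    unfolding pm sum.atMost_shift sum.lessThan_Suc by (simp add: add_ac del: binomial_Suc_Suc)
  finally have "y ^ p = dl (gpow z p) - (\<Sum>k<m. of_nat (p choose Suc k) * y ^ Suc k)"
    unfolding dl_def by (simp add: algebra_simps)
  also have "\<dots> \<in> JI p H S"
  proof (intro JI_diff sgH JI.gen zp JI_sum)
    fix k assume "k \<in> {..<m}"
    then have "Suc k < p" "Suc k \<noteq> 0" using pm by auto
    then have "p dvd (p choose Suc k)" using dvd_choose_prime pr by (metis prime_gt_0_nat neq0_conv)
    then obtain q where q: "p choose Suc k = p * q" by blast
    have "of_nat (p choose Suc k) * y ^ Suc k = of_nat p * (of_nat q * y ^ Suc k)"
      unfolding q by (simp add: mult.assoc)
    also have "\<dots> \<in> JI p H S"
      by (intro JI.rm JI.pp inH_mult inH_of_nat inH_pow sgH) (simp add: y_def inH_dl sgH zH)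
    finally show "of_nat (p choose Suc k) * y ^ Suc k \<in> JI p H S" .
  qed
  finally show ?thesis unfolding y_def .
qed

lemma stepS:
  assumes "length ys = p" "set ys \<subseteq> (JI p H (ext_sg S z) :: ('g \<Rightarrow>\<^sub>0 'a::ring_1) set)"
  shows "prod_list ys \<in> (JI p H S :: ('g \<Rightarrow>\<^sub>0 'a) set)"
proof -
  obtain t c where tc: "t \<in> (JI p H S :: ('g \<Rightarrow>\<^sub>0 'a) set)" "inH H c" "prod_list ys = t + dl z ^ length ys * c"
    using prodlist[OF assms(2)] by blast
  show ?thesis unfolding tc(3) assms(1) by (intro JI.add JI.rm tc dlp)
qed

end

lemma exists_central:
  fixes H S :: "'g::group_add set"
  assumes pr: "prime p" and sgH: "sg H" and fin: "finite H" and cardH: "card H = p ^ n"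
    and sgS: "sg S" and SH: "S \<subseteq> H" and nS: "\<forall>h\<in>H. \<forall>s\<in>S. h + s - h \<in> S"
    and SneH: "S \<noteq> H"
  shows "\<exists>z\<in>H. z \<notin> S \<and> (\<forall>h\<in>H. h + z - h - z \<in> S)"
proof -
  let ?G = "GH H"
  have grp: "group ?G" by (rule group_GH[OF sgH])
  define \<phi> where "\<phi> = (\<lambda>g. \<lambda>Q\<in>{Q. Q \<subseteq> carrier ?G}. g <#\<^bsub>?G\<^esub> Q #>\<^bsub>?G\<^esub> inv\<^bsub>?G\<^esub> g)"
  have act: "group_action ?G {Q. Q \<subseteq> carrier ?G} \<phi>"
    unfolding \<phi>_def by (rule group.action_by_conjugation_on_power_set[OF grp])
  have phi: "\<phi> g Q = (\<lambda>q. g + q - g) ` Q" if "g \<in> H" "Q \<subseteq> H" for g Q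
  proof -
    have "\<phi> g Q = (\<lambda>x. x + - g) ` ((\<lambda>q. g + q) ` Q)"
      using that unfolding \<phi>_def GH_lcos GH_rcos GH_inv[OF sgH that(1)] by simp
    then show ?thesis by (simp only: image_image diff_conv_add_uminus)
  qed
  define cos where "cos a = (\<lambda>s. s + a) ` S" for a
  define E where "E = cos ` H"
  have cos_sub: "cos a \<subseteq> H" if "a \<in> H" for a
    unfolding cos_def using that SH sgD(2)[OF sgH] by blast
  have cos_conj: "(\<lambda>q. g + q - g) ` cos a = cos (g + a - g)" if g: "g \<in> H" and a: "a \<in> H" for g a
  proof
    show "(\<lambda>q. g + q - g) ` cos a \<subseteq> cos (g + a - g)"
    proof
      fix x assume "x \<in> (\<lambda>q. g + q - g) ` cos a"
      then obtain s where s: "s \<in> S" "x = g + (s + a) - g" unfolding cos_def by blast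
      have "x = (g + s - g) + (g + a - g)" unfolding s(2) by (simp only: gsimp)
      moreover have "g + s - g \<in> S" using nS g s(1) by blast
      ultimately show "x \<in> cos (g + a - g)" unfolding cos_def by blast
    qed
  next
    show "cos (g + a - g) \<subseteq> (\<lambda>q. g + q - g) ` cos a"
    proof
      fix x assume "x \<in> cos (g + a - g)"
      then obtain s where s: "s \<in> S" "x = s + (g + a - g)" unfolding cos_def by blast
      have "x = g + ((- g + s - (- g)) + a) - g" unfolding s(2) by (simp only: gsimp)
      moreover have "- g + s - (- g) \<in> S" using nS sgD(3)[OF sgH g] s(1) by blast
      ultimately show "x \<in> (\<lambda>q. g + q - g) ` cos a" unfolding cos_def by blast
    qed
  qed
  have cos_0: "cos 0 = S" unfolding cos_def by simp
  have cos_in: "cos a = S" if "a \<in> S" for a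
  proof
    show "cos a \<subseteq> S" unfolding cos_def using sgD(2)[OF sgS] that by blast
    show "S \<subseteq> cos a"
    proof
      fix x assume "x \<in> S"
      then have "x - a \<in> S" "x = (x - a) + a" using sgD(4)[OF sgS] that by (auto simp: diff_add_cancel)
      then show "x \<in> cos a" unfolding cos_def by blast
    qed
  qed
  have in_cos: "a \<in> cos a" for a unfolding cos_def using sgD(1)[OF sgS] by force
  have finE: "finite E" unfolding E_def using fin by simp
  have EP: "E \<subseteq> {Q. Q \<subseteq> carrier ?G}" unfolding E_def using cos_sub by auto
  have rc: "rcosets\<^bsub>?G\<^esub> S = E" unfolding RCOSETS_def E_def GH_rcos cos_def by auto
  have "card E * card S = p ^ n"
    using group.lagrange[OF grp subgroup_GH[OF sgH sgS SH]] rc by (simp add: order_GH cardH)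
  then have "card E dvd p ^ n" by (metis dvd_triv_left)
  then obtain a where a: "card E = p ^ a" using divides_primepow_nat[OF pr] by blast
  have "card E \<noteq> 1"
  proof
    assume "card E = 1"
    then obtain Q where "E = {Q}" by (rule card_1_singletonE)
    moreover have "S \<in> E" unfolding E_def using cos_0 sgD(1)[OF sgH] by (metis image_eqI)
    ultimately have "\<forall>h\<in>H. cos h = S" unfolding E_def by auto
    then have "H \<subseteq> S" using in_cos by blast
    then show False using SH SneH by blast
  qed
  then have "a \<noteq> 0" using a by auto
  then have pE: "p dvd card E" using a by simp
  let ?O = "orbit ?G \<phi>"
  have orb_cos: "?O (cos a) = {cos (g + a - g) | g. g \<in> H}" if "a \<in> H" for a
  proof -
    have "?O (cos a) = {\<phi> g (cos a) | g. g \<in> H}" unfolding orbit_def by simp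
    also have "\<dots> = {cos (g + a - g) | g. g \<in> H}"
    proof -
      have pc: "\<phi> g (cos a) = cos (g + a - g)" if "g \<in> H" for g
        using phi[OF that cos_sub[OF \<open>a \<in> H\<close>]] cos_conj[OF that \<open>a \<in> H\<close>] by simp
      show ?thesis unfolding Setcompr_eq_image by (rule image_cong[OF refl pc])
    qed
    finally show ?thesis .
  qed
  have orbE: "?O Q \<subseteq> E" if QE0: "Q \<in> E" for Q
  proof -
    obtain a where "a \<in> H" "Q = cos a" using QE0 unfolding E_def by blast
    then show ?thesis unfolding E_def using orb_cos sgD(2,4)[OF sgH] by auto
  qed
  have finO: "finite (?O Q)" if "Q \<in> E" for Q using orbE[OF that] finE finite_subset by blast
  have reflO: "Q \<in> ?O Q" if "Q \<in> E" for Q using group_action.orbit_refl[OF act] EP that by blast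
  have orbits_eq: "?O Q' = ?O Q" if "Q \<in> E" "Q' \<in> ?O Q" for Q Q'
  proof -
    have Q'E: "Q' \<in> E" using orbE that by blast
    have "?O Q \<in> orbits ?G {Q. Q \<subseteq> carrier ?G} \<phi>" "?O Q' \<in> orbits ?G {Q. Q \<subseteq> carrier ?G} \<phi>"
      unfolding orbits_def using EP that(1) Q'E by blast+
    then have "?O Q' = ?O Q \<or> ?O Q' \<inter> ?O Q = {}"
      using group_action.disjoint_union[OF act] by blast
    then show ?thesis using reflO[OF Q'E] that(2) by blast
  qed
  have orb_size: "card (?O Q) = 1 \<or> p dvd card (?O Q)" if "Q \<in> E" for Q
  proof -
    have "card (?O Q) * card (stabilizer ?G \<phi> Q) = order ?G"
      using group_action.orbit_stabilizer_theorem[OF act] EP that by blast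
    then have "card (?O Q) dvd p ^ n" by (metis cardH dvd_triv_left order_GH)
    then obtain i where "card (?O Q) = p ^ i" using divides_primepow_nat[OF pr] by blast
    then show ?thesis by (cases i) auto
  qed
  define F where "F = {Q\<in>E. card (?O Q) = 1}"
  define N where "N = E - F"
  have NU: "N = \<Union> (?O ` N)"
  proof
    show "N \<subseteq> \<Union> (?O ` N)" using reflO unfolding N_def by blast
    show "\<Union> (?O ` N) \<subseteq> N"
    proof
      fix x assume "x \<in> \<Union> (?O ` N)"
      then obtain Q where Q: "Q \<in> N" "x \<in> ?O Q" by blast
      then have "?O x = ?O Q" "x \<in> E" using orbits_eq orbE unfolding N_def by blast+
      then show "x \<in> N" using Q unfolding N_def F_def by auto
    qed
  qed
  have disj: "pairwise disjnt (?O ` N)"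
    unfolding pairwise_def disjnt_def
  proof (intro ballI impI)
    fix A B assume "A \<in> ?O ` N" "B \<in> ?O ` N" "A \<noteq> B"
    then obtain Q1 Q2 where "Q1 \<in> E" "Q2 \<in> E" "A = ?O Q1" "B = ?O Q2" unfolding N_def by blast
    then show "A \<inter> B = {}" using orbits_eq \<open>A \<noteq> B\<close> by blast
  qed
  have "card N = sum card (?O ` N)"
    using NU card_Union_disjoint[OF disj] finO unfolding N_def by (metis (no_types, lifting) DiffE imageE)
  moreover have "\<forall>X\<in>?O ` N. p dvd card X" using orb_size unfolding N_def F_def by auto
  ultimately have pN: "p dvd card N" by (metis dvd_sum)
  have FE: "F \<subseteq> E" unfolding F_def by blast
  have "card E = card F + card N"
    unfolding N_def using card_Diff_subset[OF finite_subset[OF FE finE] FE] card_mono[OF finE FE] by simp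
  then have pF: "p dvd card F" using pE pN by (metis dvd_add_left_iff)
  have SE: "S \<in> E" unfolding E_def using cos_0 sgD(1)[OF sgH] by (metis image_eqI)
  have "?O S = {S}"
  proof -
    have "?O (cos 0) = {cos (g + 0 - g) | g. g \<in> H}" using orb_cos sgD(1)[OF sgH] by blast
    then show ?thesis using cos_0 sgD(1)[OF sgH] by auto
  qed
  then have SF: "S \<in> F" unfolding F_def using SE by simp
  have finF: "finite F" using finite_subset[OF FE finE] .
  have "card F > 0" using SF finF card_gt_0_iff by blast
  then have "card F \<ge> p" using pF by (simp add: dvd_imp_le)
  then have "card F \<ge> 2" using prime_ge_2_nat[OF pr] by linarith
  have "F - {S} \<noteq> {}"
  proof
    assume "F - {S} = {}"
    then have "F \<subseteq> {S}" by blast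
    then have "card F \<le> 1" using card_mono[of "{S}" F] by simp
    then show False using \<open>card F \<ge> 2\<close> by linarith
  qed
  then obtain Q where QF: "Q \<in> F" "Q \<noteq> S" by blast
  then obtain z where z: "z \<in> H" "Q = cos z" unfolding F_def E_def by blast
  have "z \<notin> S" using cos_in QF(2) z(2) by blast
  moreover have "\<forall>h\<in>H. h + z - h - z \<in> S"
  proof
    fix h assume h: "h \<in> H"
    have QE: "Q \<in> E" using QF(1) F_def by blast
    have "card (?O Q) = 1" using QF(1) F_def by blast
    then have O1: "?O Q = {Q}" using reflO[OF QE] by (metis card_1_singletonE singletonD)
    have "cos (h + z - h) \<in> ?O Q" unfolding z(2) orb_cos[OF z(1)] using h by blast
    then have "cos (h + z - h) = cos z" using O1 z(2) by blast
    then have "h + z - h \<in> cos z" using in_cos by metis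
    then obtain s where s: "s \<in> S" "h + z - h = s + z" unfolding cos_def by blast
    then have "h + z - h - z = s" by simp
    then show "h + z - h - z \<in> S" using s(1) by simp
  qed
  ultimately show ?thesis using z(1) by blast
qed

lemma exists_step:
  assumes "\<not> P (0::nat)" "P k"
  shows "\<exists>j<k. \<not> P j \<and> P (Suc j)"
  using assms by (induct k) (auto, metis less_Suc_eq)

lemma chunk:
  assumes A: "\<forall>xs. length xs = N \<longrightarrow> set xs \<subseteq> A \<longrightarrow> prod_list xs \<in> B"
  shows "length xs = N * k \<Longrightarrow> set xs \<subseteq> A \<Longrightarrow>
    \<exists>ys. length ys = k \<and> set ys \<subseteq> B \<and> prod_list xs = (prod_list ys :: 'r::monoid_mult)"
proof (induct k arbitrary: xs)
  case 0 then show ?case by (intro exI[of _ "[]"]) simp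
next
  case (Suc k)
  have len: "length xs = N + N * k" using Suc.prems(1) by simp
  have l1: "length (take N xs) = N" using len by (simp only: length_take)
  have l2: "length (drop N xs) = N * k" using len by (simp only: length_drop)
  have s1: "set (take N xs) \<subseteq> A" using Suc.prems(2) set_take_subset[of N xs] by (rule order_trans[rotated])
  have s2: "set (drop N xs) \<subseteq> A" using Suc.prems(2) set_drop_subset[of N xs] by (rule order_trans[rotated])
  obtain ys where ys: "length ys = k" "set ys \<subseteq> B" "prod_list (drop N xs) = prod_list ys"
    using Suc.hyps[OF l2 s2] by blast
  have "prod_list (take N xs) \<in> B" using A l1 s1 by blast
  moreover have "prod_list xs = prod_list (take N xs) * prod_list (drop N xs)"
    by (metis append_take_drop_id prod_list.append)
  ultimately show ?case using ys by (intro exI[of _ "prod_list (take N xs) # ys"]) simp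
qed

lemma main_ind:
  fixes H :: "'g::group_add set"
  assumes pr: "prime p" and sgH: "sg H" and fin: "finite H" and cardH: "card H = p ^ n"
    and pg: "\<forall>g\<in>H. \<exists>k. elem_order g = p ^ k"
  shows "sg S \<Longrightarrow> S \<subseteq> H \<Longrightarrow> (\<forall>h\<in>H. \<forall>s\<in>S. h + s - h \<in> S) \<Longrightarrow>
    \<exists>N. \<forall>xs. length xs = N \<longrightarrow> set xs \<subseteq> (JI p H H :: ('g \<Rightarrow>\<^sub>0 'a::ring_1) set) \<longrightarrow> prod_list xs \<in> JI p H S"
proof (induct "card H - card S" arbitrary: S rule: less_induct)
  case less
  note sgS = less.prems(1) and SH = less.prems(2) and nS = less.prems(3)
  show ?case
  proof (cases "S = H")
    case True
    show ?thesis
    proof (intro exI[of _ 1] allI impI)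
      fix xs :: "('g \<Rightarrow>\<^sub>0 'a) list" assume "length xs = 1" "set xs \<subseteq> JI p H H"
      then show "prod_list xs \<in> JI p H S" using True by (cases xs) auto
    qed
  next
    case False
    obtain z0 where z0: "z0 \<in> H" "z0 \<notin> S" "\<forall>h\<in>H. h + z0 - h - z0 \<in> S"
      using exists_central[OF pr sgH fin cardH sgS SH nS False] by blast
    obtain k where "elem_order z0 = p ^ k" using pg z0(1) by blast
    then have z0k: "gpow z0 (p ^ k) = 0" using elem_order_pow pr by blast
    have pk: "p ^ k > 0" using pr by (simp add: prime_gt_0_nat)
    obtain j where j: "gpow z0 (p ^ j) \<notin> S" "gpow z0 (p ^ Suc j) \<in> S"
      using exists_step[of "\<lambda>j. gpow z0 (p ^ j) \<in> S" k] z0(2) z0k sgD(1)[OF sgS] by auto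
    define z where "z = gpow z0 (p ^ j)"
    have zH: "z \<in> H" unfolding z_def by (rule sg_gpow[OF sgH z0(1)])
    have zS: "z \<notin> S" using j(1) z_def by simp
    have zp: "gpow z p \<in> S" using j(2) unfolding z_def gpow_mult[symmetric] by (simp add: mult.commute)
    have ze: "gpow z (p ^ k) = 0" unfolding z_def gpow_mult[symmetric]
      by (simp only: mult.commute[of "p^j"] gpow_mult z0k gpow_zero_base)
    have cz: "\<forall>h\<in>H. h + z - h - z \<in> S"
    proof
      fix h assume h: "h \<in> H"
      define c where "c = h + z0 - h - z0"
      have c: "c \<in> S" using z0(3) h c_def by blast
      have hz: "h + z0 - h = c + z0" unfolding c_def by (simp only: gsimp)
      obtain t where t: "t \<in> S" "gpow (c + z0) (p ^ j) = t + gpow z0 (p ^ j)"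
        using gpow_cz[OF sgH sgS SH nS z0(1) z0(3) z0k pk c] by blast
      have "h + z - h = t + z" unfolding z_def gpow_conj hz t(2) ..
      then have "h + z - h - z = t" by simp
      then show "h + z - h - z \<in> S" using t(1) by simp
    qed
    define S' where "S' = ext_sg S z"
    have sgS': "sg S'" unfolding S'_def by (rule sg_ext[OF sgH sgS SH nS zH cz ze pk])
    have S'H: "S' \<subseteq> H" unfolding S'_def by (rule ext_sg_H[OF sgH sgS SH nS zH cz ze pk])
    have nS': "\<forall>h\<in>H. \<forall>s\<in>S'. h + s - h \<in> S'" unfolding S'_def by (rule normal_ext[OF sgH sgS SH nS zH cz ze pk])
    have SS': "S \<subset> S'" unfolding S'_def
      using ext_sg_sub[OF sgH sgS SH nS zH cz ze pk] z_ext[OF sgH sgS SH nS zH cz ze pk] zS by blast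
    have "card S < card S'" using psubset_card_mono[OF finite_subset[OF S'H fin] SS'] .
    moreover have "card S' \<le> card H" using card_mono[OF fin S'H] .
    ultimately have "card H - card S' < card H - card S" by linarith
    then obtain N where N: "\<forall>xs. length xs = N \<longrightarrow> set xs \<subseteq> (JI p H H :: ('g \<Rightarrow>\<^sub>0 'a) set) \<longrightarrow> prod_list xs \<in> JI p H S'"
      using less.hyps[OF _ sgS' S'H nS'] by blast
    show ?thesis
    proof (intro exI[of _ "N * p"] allI impI)
      fix xs :: "('g \<Rightarrow>\<^sub>0 'a) list" assume xs: "length xs = N * p" "set xs \<subseteq> JI p H H"
      obtain ys where ys: "length ys = p" "set ys \<subseteq> JI p H S'" "prod_list xs = prod_list ys"
        using chunk[OF N xs] by blast
      show "prod_list xs \<in> JI p H S" unfolding ys(3)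
        using stepS[OF pr sgH sgS SH nS zH cz zp ys(1)] ys(2) unfolding S'_def by blast
    qed
  qed
qed

lemma geom2: "(\<Sum>i<n. x ^ i) * ((x::'r::ring_1) - 1) = x ^ n - 1"
proof (induct n)
  case 0 then show ?case by simp
next
  case (Suc n)
  have "(\<Sum>i<Suc n. x ^ i) * (x - 1) = (\<Sum>i<n. x ^ i) * (x - 1) + x ^ n * (x - 1)"
    by (simp add: distrib_right)
  also have "\<dots> = x ^ Suc n - 1" unfolding Suc by (simp add: right_diff_distrib power_commutes)
  finally show ?case .
qed

lemma unit_1_plus_nil:
  assumes "(n::'r::ring_1) ^ k = 0"
  shows "(1 + n) * (\<Sum>i<k. (- n) ^ i) = 1" "(\<Sum>i<k. (- n) ^ i) * (1 + n) = 1"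
proof -
  have z: "(- n) ^ k = 0" using power_minus[of n k] assms by simp
  have e: "1 + n = - (- n - 1)" by simp
  have h1: "(- n - 1) * (\<Sum>i<k. (- n) ^ i) = - 1" using geom1[of "- n" k] z by simp
  have "(1 + n) * (\<Sum>i<k. (- n) ^ i) = - ((- n - 1) * (\<Sum>i<k. (- n) ^ i))"
    unfolding e by (rule mult_minus_left)
  then show "(1 + n) * (\<Sum>i<k. (- n) ^ i) = 1" unfolding h1 by simp
  have h2: "(\<Sum>i<k. (- n) ^ i) * (- n - 1) = - 1" using geom2[of "- n" k] z by simp
  have "(\<Sum>i<k. (- n) ^ i) * (1 + n) = - ((\<Sum>i<k. (- n) ^ i) * (- n - 1))"
    unfolding e by (rule mult_minus_right)
  then show "(\<Sum>i<k. (- n) ^ i) * (1 + n) = 1" unfolding h2 by simp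
qed

lemma of_nat_mult_pow: "(of_nat k * b) ^ m = of_nat k ^ m * (b::'r::ring_1) ^ m"
proof (induct m)
  case 0 then show ?case by simp
next
  case (Suc m)
  have c: "b * of_nat k ^ m = of_nat k ^ m * b"
    by (metis mult_of_nat_commute of_nat_power)
  have "(of_nat k * b) ^ Suc m = of_nat k * (b * of_nat k ^ m) * b ^ m"
    using Suc by (simp add: mult.assoc)
  also have "\<dots> = of_nat k ^ Suc m * b ^ Suc m" unfolding c by (simp add: mult.assoc)
  finally show ?case .
qed

definition aug :: "('g::group_add \<Rightarrow>\<^sub>0 'a::ring_1) \<Rightarrow> 'a" where
  "aug x = (\<Sum>g\<in>Poly_Mapping.keys x. Poly_Mapping.lookup x g)"

lemma CC_sum: "CC (sum f I) = (\<Sum>i\<in>I. CC (f i))"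
  by (induct I rule: infinite_finite_induct) (simp_all add: CC_add)

lemma x_minus_aug:
  fixes x :: "'g::group_add \<Rightarrow>\<^sub>0 'a::ring_1"
  assumes sgH: "sg H" and xH: "inH H x"
  shows "x - CC (aug x) \<in> JI p H H"
proof -
  have cd: "CC r * dl g = Poly_Mapping.single g r - CC r" for r and g :: 'g
    by (simp add: dl_def right_diff_distrib single_gel)
  have "x - CC (aug x) = (\<Sum>g\<in>Poly_Mapping.keys x. Poly_Mapping.single g (Poly_Mapping.lookup x g)) - CC (aug x)"
    by (rule arg_cong[where f="\<lambda>y. y - CC (aug x)"], rule expansion)
  also have "\<dots> = (\<Sum>g\<in>Poly_Mapping.keys x. CC (Poly_Mapping.lookup x g) * dl g)"
    unfolding cd aug_def CC_sum sum_subtractf ..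
  also have "\<dots> \<in> JI p H H"
    using xH unfolding inH_def by (intro JI_sum JI.lm inH_CC sgH JI.gen) blast
  finally show ?thesis .
qed

lemma JI_nil:
  fixes w :: "'g::group_add \<Rightarrow>\<^sub>0 'a::ring_1"
  assumes pr: "prime p" and pm: "(of_nat p :: 'a) ^ m = 0" and sgH: "sg H" and fin: "finite H"
    and pg: "\<forall>g\<in>H. \<exists>k. elem_order g = p ^ k" and w: "w \<in> JI p H H"
  shows "\<exists>k. w ^ k = 0"
proof -
  obtain n where cardH: "card H = p ^ n" using card_pgroup[OF pr sgH fin pg] by blast
  have sg0: "sg {0::'g}" by (simp add: sg_def)
  have "{0} \<subseteq> H" using sgD(1)[OF sgH] by simp
  moreover have "\<forall>h\<in>H. \<forall>s\<in>{0::'g}. h + s - h \<in> {0}" by simp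
  ultimately obtain N where N: "\<forall>xs. length xs = N \<longrightarrow> set xs \<subseteq> (JI p H H :: ('g \<Rightarrow>\<^sub>0 'a) set) \<longrightarrow> prod_list xs \<in> JI p H {0}"
    using main_ind[OF pr sgH fin cardH pg sg0] by blast
  have "set (replicate N w) \<subseteq> JI p H H" using w by (induct N) auto
  then have "prod_list (replicate N w) \<in> JI p H {0}" using N length_replicate[of N w] by blast
  then have "w ^ N \<in> JI p H {0}" by (simp add: prod_list_replicate)
  then obtain b where b: "w ^ N = of_nat p * b" using JI_zero_sub by blast
  have p0: "(of_nat p :: 'g \<Rightarrow>\<^sub>0 'a) ^ m = 0"
  proof -
    have "(of_nat p :: 'g \<Rightarrow>\<^sub>0 'a) ^ m = CC ((of_nat p :: 'a) ^ m)" by (simp only: CC_pow[symmetric] CC_of_nat)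
    also have "\<dots> = 0" using pm by simp
    finally show ?thesis .
  qed
  have "w ^ (N * m) = 0" unfolding power_mult b of_nat_mult_pow p0 by simp
  then show ?thesis by blast
qed

theorem lemma3p2:
  fixes p :: nat
  assumes "prime p"
    and "GWNC TYPE('a::ring_1)"
    and "is_nilpotent (of_nat p :: 'a)"
    and "p_group p TYPE('g::group_add)"
    and "locally_finite_group TYPE('g)"
  shows "GWNC TYPE('g \<Rightarrow>\<^sub>0 'a)"
  unfolding GWNC_def
proof (intro allI impI)
  fix a :: "'g \<Rightarrow>\<^sub>0 'a"
  assume nu: "\<not> is_unit_ring a"
  obtain m where pm: "(of_nat p :: 'a) ^ m = 0" using assms(3) unfolding is_nilpotent_def by blast
  define H where "H = gen_subgroup (Poly_Mapping.keys a)"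
  have sgH: "sg H" unfolding sg_def H_def by (auto intro: gen_subgroup.intros)
  have fin: "finite H" using assms(5) unfolding locally_finite_group_def H_def by simp
  have pg: "\<forall>g\<in>H. \<exists>k. elem_order g = p ^ k" using assms(4) unfolding p_group_def by blast
  have aH: "inH H a" unfolding inH_def H_def by (auto intro: gen_subgroup.gen)
  define r where "r = aug a"
  define y where "y = a - CC r"
  have yJ: "y \<in> (JI p H H :: ('g \<Rightarrow>\<^sub>0 'a) set)" unfolding y_def r_def by (rule x_minus_aug[OF sgH aH])
  have ay: "a = CC r + y" unfolding y_def by simp
  have nilJ: "\<exists>k. w ^ k = 0" if "w \<in> (JI p H H :: ('g \<Rightarrow>\<^sub>0 'a) set)" for w
    by (rule JI_nil[OF assms(1) pm sgH fin pg that])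
  show "\<exists>q e. is_nilpotent q \<and> is_idempotent e \<and> (a = q + e \<or> a = q - e)"
  proof (cases "is_unit_ring r")
    case True
    then obtain u where u: "r * u = 1" "u * r = 1" unfolding is_unit_ring_def by blast
    have l: "CC u * a = 1 + CC u * y" unfolding ay by (simp add: distrib_left CC_mult u)
    have rr: "a * CC u = 1 + y * CC u" unfolding ay by (simp add: distrib_right CC_mult u)
    obtain k1 where k1: "(CC u * y) ^ k1 = 0" using nilJ[OF JI.lm[OF inH_CC[OF sgH] yJ]] by blast
    obtain k2 where k2: "(y * CC u) ^ k2 = 0" using nilJ[OF JI.rm[OF inH_CC[OF sgH] yJ]] by blast
    define L where "L = (\<Sum>i<k1. (- (CC u * y)) ^ i) * CC u"
    define R where "R = CC u * (\<Sum>i<k2. (- (y * CC u)) ^ i)"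
    have La: "L * a = 1" unfolding L_def mult.assoc l by (rule unit_1_plus_nil(2)[OF k1])
    have aR: "a * R = 1" unfolding R_def mult.assoc[symmetric] rr by (rule unit_1_plus_nil(1)[OF k2])
    have "L = R" by (metis La aR mult.assoc mult_1_left mult_1_right)
    then have "is_unit_ring a" unfolding is_unit_ring_def using La aR by metis
    with nu show ?thesis by blast
  next
    case False
    then obtain q e where qe: "is_nilpotent q" "is_idempotent e" "r = q + e \<or> r = q - e"
      using assms(2) unfolding GWNC_def by blast
    obtain k where qk: "q ^ k = 0" using qe(1) unfolding is_nilpotent_def by blast
    define Q where "Q = CC q + y"
    have powJ: "Q ^ j - CC (q ^ j) \<in> (JI p H H :: ('g \<Rightarrow>\<^sub>0 'a) set)" for j
    proof (induct j)
      case 0 then show ?case by (simp add: JI_0)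
    next
      case (Suc j)
      have QH: "inH H Q" unfolding Q_def by (intro inH_add inH_CC sgH JI_inH[OF sgH _ yJ]) simp
      have "Q ^ Suc j - CC (q ^ Suc j) = CC q * (Q ^ j - CC (q ^ j)) + y * Q ^ j"
        unfolding Q_def by (simp add: algebra_simps CC_mult)
      also have "\<dots> \<in> JI p H H"
        by (intro JI.add JI.lm JI.rm inH_CC sgH Suc inH_pow QH yJ)
      finally show ?case .
    qed
    have "Q ^ k \<in> (JI p H H :: ('g \<Rightarrow>\<^sub>0 'a) set)" using powJ[of k] qk by simp
    then obtain k' where "(Q ^ k) ^ k' = 0" using nilJ by blast
    then have "is_nilpotent Q" unfolding is_nilpotent_def by (metis power_mult)
    moreover have "is_idempotent (CC e :: 'g \<Rightarrow>\<^sub>0 'a)"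
      using qe(2) unfolding is_idempotent_def by (simp add: CC_mult)
    moreover have "a = Q + CC e \<or> a = Q - CC e"
      using qe(3) unfolding ay Q_def by (auto simp: CC_add CC_diff algebra_simps)
    ultimately show ?thesis by blast
  qed
qed

end
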